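(* Let $T$ be an open cone in $V$ with basepoint $b\in T$. For each $x\in\partial T\setminus[0]_T$, the set $A_T(x)$ is closed in the topology of pointwise convergence of functions on $T$ (relative to the set of Funk horofunctions of $T$): if $g_n\in A_T(x)$ converge pointwise to a Funk horofunction $g$, then $g\in A_T(x)$.
   Context: $V$ is a finite-dimensional real vector space. An open cone is a nonempty open convex set $T\subset V$ with $\lambda T\subseteq T$ for all $\lambda>0$ and $0\notin T$; $\partial T$ its boundary. Write $x\le_T y$ iff $y-x\in\overline T$, $[0]_T:=\overline T\cap(-\overline T)$. $M_T(y/x):=\inf\{\lambda>0:y\le_T\lambda x\}$, $F_T(y,x):=\log M_T(y/x)$. A sequence $(x_n)$ in $T$ converges in the Funk sense to $g$ if $F_T(\cdot,x_n)-F_T(b,x_n)\to g$ pointwise on $T$; a Funk horofunction is such a limit not of the form $F_T(\cdot,p)-F_T(b,p)$, $p\in T$. $A_T(x)$ is the set of Funk horofunctions that are Funk-sense limits of sequences in $T$ converging to $x$ in the usual topology of $V$. *)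

theory Defs
  imports "HOL-Analysis.Analysis"
begin

text \<open>V is modelled by a type of class euclidean_space (finite-dimensional real inner
product space; the inner product is irrelevant here, only the topology is used).\<close>

definition open_cone :: "'a::euclidean_space set \<Rightarrow> bool" where
  "open_cone T \<longleftrightarrow> T \<noteq> {} \<and> open T \<and> convex T \<and>
     (\<forall>c::real. c > 0 \<longrightarrow> (\<forall>x\<in>T. c *\<^sub>R x \<in> T)) \<and> 0 \<notin> T"

definition cone_le :: "'a::euclidean_space set \<Rightarrow> 'a \<Rightarrow> 'a \<Rightarrow> bool" where
  "cone_le T x y \<longleftrightarrow> y - x \<in> closure T"

definition cone_zero :: "'a::euclidean_space set \<Rightarrow> 'a set" where
  "cone_zero T = closure T \<inter> uminus ` closure T"

definition funk_M :: "'a::euclidean_space set \<Rightarrow> 'a \<Rightarrow> 'a \<Rightarrow> real" where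
  "funk_M T y x = Inf {c::real. c > 0 \<and> cone_le T y (c *\<^sub>R x)}"

definition funk_F :: "'a::euclidean_space set \<Rightarrow> 'a \<Rightarrow> 'a \<Rightarrow> real" where
  "funk_F T y x = ln (funk_M T y x)"

definition funk_converges ::
    "'a::euclidean_space set \<Rightarrow> 'a \<Rightarrow> (nat \<Rightarrow> 'a) \<Rightarrow> ('a \<Rightarrow> real) \<Rightarrow> bool" where
  "funk_converges T b xs g \<longleftrightarrow>
     (\<forall>y\<in>T. (\<lambda>n. funk_F T y (xs n) - funk_F T b (xs n)) \<longlonglongrightarrow> g y)"

definition funk_horofunction :: "'a::euclidean_space set \<Rightarrow> 'a \<Rightarrow> ('a \<Rightarrow> real) \<Rightarrow> bool" where
  "funk_horofunction T b g \<longleftrightarrow>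
     (\<exists>xs. (\<forall>n. xs n \<in> T) \<and> funk_converges T b xs g) \<and>
     \<not> (\<exists>p\<in>T. \<forall>y\<in>T. g y = funk_F T y p - funk_F T b p)"

definition funk_A :: "'a::euclidean_space set \<Rightarrow> 'a \<Rightarrow> 'a \<Rightarrow> ('a \<Rightarrow> real) \<Rightarrow> bool" where
  "funk_A T b x g \<longleftrightarrow> funk_horofunction T b g \<and>
     (\<exists>xs. (\<forall>n. xs n \<in> T) \<and> xs \<longlonglongrightarrow> x \<and> funk_converges T b xs g)"

end

theory Submission imports Defs begin

lemma oc_sum:
  assumes oc: "open_cone T" and u: "u \<in> T" and v: "v \<in> T"
  shows "u + v \<in> T"
proof -
  have cv: "convex T" and sc: "\<And>c x. c > 0 \<Longrightarrow> x \<in> T \<Longrightarrow> c *\<^sub>R x \<in> T"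
    using oc unfolding open_cone_def by auto
  have "(1/2::real) *\<^sub>R u + (1/2::real) *\<^sub>R v \<in> T"
    using convexD[OF cv u v, of "1/2" "1/2"] by simp
  then have "(2::real) *\<^sub>R ((1/2::real) *\<^sub>R u + (1/2::real) *\<^sub>R v) \<in> T" by (rule sc[rotated]) simp
  then show ?thesis by (simp add: scaleR_add_right)
qed

lemma oc_add_closure:
  assumes oc: "open_cone T" and x: "x \<in> T" and y: "y \<in> closure T"
  shows "x + y \<in> T"
proof -
  have "open T" using oc unfolding open_cone_def by auto
  then obtain r where r: "r > 0" "ball x r \<subseteq> T" using x openE by blast
  obtain y' where y': "y' \<in> T" "dist y' y < r" using y r closure_approachable by blast
  have "x + y - y' \<in> ball x r" using y' by (simp add: dist_norm norm_minus_commute)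
  then have "x + y - y' \<in> T" using r by blast
  from oc_sum[OF oc this y'(1)] show ?thesis by simp
qed

lemma oc_closure_add:
  assumes oc: "open_cone T" and a: "a \<in> closure T" and b: "b \<in> closure T"
  shows "a + b \<in> closure T"
  unfolding closure_approachable
proof (intro allI impI)
  fix e :: real assume e: "e > 0"
  obtain a' where a': "a' \<in> T" "dist a' a < e/2" using a e closure_approachable
    by (metis half_gt_zero)
  obtain b' where b': "b' \<in> T" "dist b' b < e/2" using b e closure_approachable
    by (metis half_gt_zero)
  have "dist (a' + b') (a + b) \<le> dist a' a + dist b' b"
    by (simp add: dist_norm) (metis add_diff_add norm_triangle_ineq)
  then show "\<exists>y\<in>T. dist y (a + b) < e" using a' b' oc_sum[OF oc a'(1) b'(1)] by force
qed

lemma oc_closure_scale: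
  assumes oc: "open_cone T" and c: "c > 0" and a: "a \<in> closure T"
  shows "c *\<^sub>R a \<in> closure T"
  unfolding closure_approachable
proof (intro allI impI)
  fix e :: real assume e: "e > 0"
  obtain a' where a': "a' \<in> T" "dist a' a < e/c" using a e c closure_approachable
    by (metis divide_pos_pos)
  have "c *\<^sub>R a' \<in> T" using oc a'(1) c unfolding open_cone_def by auto
  moreover have "dist (c *\<^sub>R a') (c *\<^sub>R a) = c * dist a' a"
    using c by (simp add: dist_norm scaleR_diff_right[symmetric])
  moreover have "c * dist a' a < e" using a'(2) c by (simp add: field_simps)
  ultimately show "\<exists>y\<in>T. dist y (c *\<^sub>R a) < e" by force
qed

lemma oc_neg:
  assumes oc: "open_cone T" and x: "x \<in> T"
  shows "- x \<notin> closure T"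
proof
  assume "- x \<in> closure T"
  from oc_add_closure[OF oc x this] have "0 \<in> T" by simp
  then show False using oc unfolding open_cone_def by auto
qed

lemma M_le:
  assumes "c > 0" "c *\<^sub>R w - y \<in> closure T"
  shows "funk_M T y w \<le> c"
  unfolding funk_M_def
  by (rule cInf_lower) (use assms in \<open>auto simp: cone_le_def bdd_below_def intro!: exI[of _ 0]\<close>)

lemma S_ne:
  assumes oc: "open_cone T" and w: "w \<in> T"
  shows "\<exists>c>0. c *\<^sub>R w - y \<in> closure T"
proof -
  have "open T" using oc unfolding open_cone_def by auto
  then obtain r where r: "r > 0" "ball w r \<subseteq> T" using w openE by blast
  define c where "c = norm y / r + 1"
  have "norm y / r \<ge> 0" using r by simp
  then have c: "c > 0" unfolding c_def by linarith
  have "norm y < r * c" unfolding c_def using r by (simp add: field_simps)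
  then have "norm ((1/c) *\<^sub>R y) < r" using c by (simp add: field_simps)
  then have "w - (1/c) *\<^sub>R y \<in> ball w r" by (simp add: dist_norm)
  then have "w - (1/c) *\<^sub>R y \<in> T" using r by blast
  then have "c *\<^sub>R (w - (1/c) *\<^sub>R y) \<in> T" using c oc unfolding open_cone_def by auto
  then have "c *\<^sub>R w - y \<in> T" using c by (simp add: scaleR_diff_right)
  then show ?thesis using c closure_subset by blast
qed

lemma M_ge:
  assumes oc: "open_cone T" and w: "w \<in> T"
    and H: "\<And>c. c > 0 \<Longrightarrow> c *\<^sub>R w - y \<in> closure T \<Longrightarrow> m \<le> c"
  shows "m \<le> funk_M T y w"
  unfolding funk_M_def
  by (rule cInf_greatest) (use S_ne[OF oc w, of y] H in \<open>auto simp: cone_le_def\<close>)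

lemma M_pos:
  assumes oc: "open_cone T" and y: "y \<in> T" and w: "w \<in> T"
  shows "0 < funk_M T y w"
proof -
  have "open T" using oc unfolding open_cone_def by auto
  then obtain r where r: "r > 0" "ball y r \<subseteq> T" using y openE by blast
  have w0: "w \<noteq> 0" using w oc unfolding open_cone_def by auto
  then have nw: "norm w > 0" by simp
  have "r / norm w \<le> funk_M T y w"
  proof (rule M_ge[OF oc w])
    fix c :: real assume c: "c > 0" "c *\<^sub>R w - y \<in> closure T"
    show "r / norm w \<le> c"
    proof (rule ccontr)
      assume "\<not> r / norm w \<le> c"
      then have "c * norm w < r" using nw by (simp add: field_simps)
      then have "y - c *\<^sub>R w \<in> ball y r" using c by (simp add: dist_norm)
      then have "y - c *\<^sub>R w \<in> T" using r by blast
      from oc_neg[OF oc this] c(2) show False by simp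
    qed
  qed
  moreover have "r / norm w > 0" using r nw by simp
  ultimately show ?thesis by linarith
qed

lemma M_mult:
  assumes oc: "open_cone T" and y: "y \<in> T" and w: "w \<in> T" and z: "z \<in> T"
  shows "funk_M T y z \<le> funk_M T y w * funk_M T w z"
proof -
  have key: "funk_M T y z \<le> a * b" if a: "a > 0" "a *\<^sub>R w - y \<in> closure T"
      and b: "b > 0" "b *\<^sub>R z - w \<in> closure T" for a b
  proof (rule M_le)
    show "a * b > 0" using a b by simp
    have eq: "(a * b) *\<^sub>R z - y = a *\<^sub>R (b *\<^sub>R z - w) + (a *\<^sub>R w - y)"
      by (simp add: algebra_simps)
    show "(a * b) *\<^sub>R z - y \<in> closure T"
      by (subst eq) (rule oc_closure_add[OF oc oc_closure_scale[OF oc a(1) b(2)] a(2)])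
  qed
  have pw: "funk_M T w z > 0" using M_pos[OF oc w z] .
  have "funk_M T y z / b \<le> funk_M T y w" if b: "b > 0" "b *\<^sub>R z - w \<in> closure T" for b
  proof (rule M_ge[OF oc w])
    fix a :: real assume a: "a > 0" "a *\<^sub>R w - y \<in> closure T"
    from key[OF a b] show "funk_M T y z / b \<le> a" using b by (simp add: field_simps)
  qed
  then have "funk_M T y z \<le> funk_M T y w * b" if b: "b > 0" "b *\<^sub>R z - w \<in> closure T" for b
    using that by (simp add: field_simps)
  have py: "funk_M T y w > 0" using M_pos[OF oc y w] .
  have "funk_M T y z / funk_M T y w \<le> funk_M T w z"
  proof (rule M_ge[OF oc z])
    fix b :: real assume b: "b > 0" "b *\<^sub>R z - w \<in> closure T"
    from \<open>\<And>b. b > 0 \<Longrightarrow> b *\<^sub>R z - w \<in> closure T \<Longrightarrow> funk_M T y z \<le> funk_M T y w * b\<close>[OF b]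
    show "funk_M T y z / funk_M T y w \<le> b" using py by (simp add: field_simps)
  qed
  then show ?thesis using py by (simp add: field_simps)
qed

lemma M_near:
  assumes oc: "open_cone T" and r: "r > 0" "ball w r \<subseteq> T" and c: "c > 1"
    and d: "c * dist y w < r * (c - 1)"
  shows "funk_M T y w \<le> c" "funk_M T w y \<le> c"
proof -
  have c1: "c - 1 > 0" using c by simp
  have dr: "dist y w < r * (c - 1)" using d c
    by (smt (verit) mult_le_cancel_right1 zero_le_dist)
  have "norm ((1/(c-1)) *\<^sub>R (w - y)) = dist y w / (c-1)" using c1
    by (simp add: dist_norm norm_minus_commute)
  also have "\<dots> < r" using dr c1 by (simp add: divide_less_eq)
  finally have "norm ((1/(c-1)) *\<^sub>R (w - y)) < r" .
  then have "w + (1/(c-1)) *\<^sub>R (w - y) \<in> T" using r by (auto simp: dist_norm)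
  then have "(c-1) *\<^sub>R (w + (1/(c-1)) *\<^sub>R (w - y)) \<in> T" using c1 oc unfolding open_cone_def by auto
  moreover have "(c-1) *\<^sub>R (w + (1/(c-1)) *\<^sub>R (w - y)) = c *\<^sub>R w - y"
    using c1 by (simp add: algebra_simps)
  ultimately have "c *\<^sub>R w - y \<in> closure T" using closure_subset by auto
  then show "funk_M T y w \<le> c" using c by (intro M_le) auto
  have "norm ((c/(c-1)) *\<^sub>R (y - w)) = c * dist y w / (c-1)" using c1 c
    by (simp add: dist_norm)
  also have "\<dots> < r" using d c1 by (simp add: divide_less_eq)
  finally have "norm ((c/(c-1)) *\<^sub>R (y - w)) < r" .
  then have "w + (c/(c-1)) *\<^sub>R (y - w) \<in> T" using r by (auto simp: dist_norm)
  then have "(c-1) *\<^sub>R (w + (c/(c-1)) *\<^sub>R (y - w)) \<in> T" using c1 oc unfolding open_cone_def by auto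
  moreover have "(c-1) *\<^sub>R (w + (c/(c-1)) *\<^sub>R (y - w)) = c *\<^sub>R y - w"
  proof -
    have cc: "(c-1)*(c/(c-1)) = c" using c1 by simp
    have "(c-1) *\<^sub>R (w + (c/(c-1)) *\<^sub>R (y - w)) = (c-1) *\<^sub>R w + ((c-1)*(c/(c-1))) *\<^sub>R (y - w)"
      by (simp only: scaleR_add_right scaleR_scaleR)
    also have "\<dots> = c *\<^sub>R y - w" unfolding cc by (simp add: algebra_simps)
    finally show ?thesis .
  qed
  ultimately have "c *\<^sub>R y - w \<in> closure T" using closure_subset by auto
  then show "funk_M T w y \<le> c" using c by (intro M_le) auto
qed

definition lipP :: "'a::euclidean_space set \<Rightarrow> ('a \<Rightarrow> real) \<Rightarrow> bool" where
  "lipP T h \<longleftrightarrow> (\<forall>y w r c. ball w r \<subseteq> T \<longrightarrow> 0 < r \<longrightarrow> 1 < c \<longrightarrow> c * dist y w < r * (c - 1)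
      \<longrightarrow> \<bar>h y - h w\<bar> \<le> ln c)"

lemma lipP_D:
  assumes "lipP T h" "ball w r \<subseteq> T" "0 < r" "1 < c" "c * dist y w < r * (c - 1)"
  shows "\<bar>h y - h w\<bar> \<le> ln c"
  using assms unfolding lipP_def by blast

lemma dist_lt_r:
  assumes "0 < r" "1 < c" "c * dist y w < r * (c - 1)"
  shows "dist y w < r"
proof -
  have "r * (c - 1) < r * c" using assms(1) by simp
  then have "c * dist y w < c * r" using assms(3) by (simp add: mult.commute)
  then show ?thesis using assms(2) by simp
qed

lemma lipP_f:
  assumes oc: "open_cone T" and z: "z \<in> T"
  shows "lipP T (\<lambda>y. funk_F T y z - funk_F T b z)"
  unfolding lipP_def
proof (intro allI impI)
  fix y w :: "'a" and r c :: real
  assume r: "ball w r \<subseteq> T" "0 < r" and c: "1 < c" and d: "c * dist y w < r * (c - 1)"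
  have w: "w \<in> T" using r by auto
  have "dist y w < r" using dist_lt_r[OF r(2) c d] .
  then have y: "y \<in> T" using r by (auto simp: dist_commute)
  have m1: "funk_M T y w \<le> c" and m2: "funk_M T w y \<le> c" using M_near[OF oc r(2) r(1) c d] by auto
  have pyz: "funk_M T y z > 0" and pwz: "funk_M T w z > 0" and pyw: "funk_M T y w > 0"
    and pwy: "funk_M T w y > 0"
    using M_pos[OF oc] y w z by auto
  have "ln (funk_M T y z) \<le> ln (funk_M T y w * funk_M T w z)"
    using M_mult[OF oc y w z] pyz pyw pwz by simp
  also have "\<dots> = ln (funk_M T y w) + ln (funk_M T w z)" using pyw pwz by (simp add: ln_mult)
  also have "\<dots> \<le> ln c + ln (funk_M T w z)" using m1 pyw by simp
  finally have A: "ln (funk_M T y z) \<le> ln c + ln (funk_M T w z)" .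
  have "ln (funk_M T w z) \<le> ln (funk_M T w y * funk_M T y z)"
    using M_mult[OF oc w y z] pyz pwy pwz by simp
  also have "\<dots> = ln (funk_M T w y) + ln (funk_M T y z)" using pwy pyz by (simp add: ln_mult)
  also have "\<dots> \<le> ln c + ln (funk_M T y z)" using m2 pwy by simp
  finally have B: "ln (funk_M T w z) \<le> ln c + ln (funk_M T y z)" .
  show "\<bar>funk_F T y z - funk_F T b z - (funk_F T w z - funk_F T b z)\<bar> \<le> ln c"
    using A B unfolding funk_F_def by linarith
qed

lemma lipP_lim:
  assumes H: "\<And>n. lipP T (h n)" and L: "\<And>y. y \<in> T \<Longrightarrow> (\<lambda>n. h n y) \<longlonglongrightarrow> G y"
  shows "lipP T G"
  unfolding lipP_def
proof (intro allI impI)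
  fix y w :: "'a" and r c :: real
  assume r: "ball w r \<subseteq> T" "0 < r" and c: "1 < c" and d: "c * dist y w < r * (c - 1)"
  have w: "w \<in> T" using r by auto
  have "dist y w < r" using dist_lt_r[OF r(2) c d] .
  then have y: "y \<in> T" using r by (auto simp: dist_commute)
  have "(\<lambda>n. \<bar>h n y - h n w\<bar>) \<longlonglongrightarrow> \<bar>G y - G w\<bar>"
    by (intro tendsto_intros L y w)
  moreover have "\<forall>n\<ge>0. \<bar>h n y - h n w\<bar> \<le> ln c"
    using H r c d unfolding lipP_def by blast
  ultimately show "\<bar>G y - G w\<bar> \<le> ln c" by (intro LIMSEQ_le_const2) auto
qed

theorem mainTheorem18:
  fixes T :: "'a::euclidean_space set" and b x :: 'a
    and gs :: "nat \<Rightarrow> 'a \<Rightarrow> real" and g :: "'a \<Rightarrow> real"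
  assumes "open_cone T" and "b \<in> T"
    and "x \<in> frontier T - cone_zero T"
    and "\<And>n. funk_A T b x (gs n)"
    and "\<And>y. y \<in> T \<Longrightarrow> (\<lambda>n. gs n y) \<longlonglongrightarrow> g y"
    and "funk_horofunction T b g"
  shows "funk_A T b x g"
proof -
  note oc = assms(1)
  have "\<forall>n. \<exists>xs. (\<forall>k. xs k \<in> T) \<and> xs \<longlonglongrightarrow> x \<and> funk_converges T b xs (gs n)"
    using assms(4) unfolding funk_A_def by blast
  then obtain X where X: "\<And>n k. X n k \<in> T" "\<And>n. X n \<longlonglongrightarrow> x"
    "\<And>n. funk_converges T b (X n) (gs n)" by metis
  define f where "f z y = funk_F T y z - funk_F T b z" for z y
  have Xc: "\<And>n y. y \<in> T \<Longrightarrow> (\<lambda>k. f (X n k) y) \<longlonglongrightarrow> gs n y"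
    using X(3) unfolding funk_converges_def f_def by blast
  have Pf: "\<And>z. z \<in> T \<Longrightarrow> lipP T (f z)"
    unfolding f_def using lipP_f[OF oc] by blast
  have Pgs: "\<And>n. lipP T (gs n)"
    by (rule lipP_lim[where h="\<lambda>k. f (X n k)" for n]) (use Pf X(1) Xc in auto)
  have Pg: "lipP T g" by (rule lipP_lim[of T gs]) (use Pgs assms(5) in auto)
  obtain D :: "'a set" where D: "countable D" "\<And>U. open U \<Longrightarrow> U \<noteq> {} \<Longrightarrow> \<exists>d\<in>D. d \<in> U"
    using countable_dense_exists by blast
  have oT: "open T" and neT: "T \<noteq> {}" using oc unfolding open_cone_def by auto
  have neD: "D \<inter> T \<noteq> {}" using D(2)[OF oT neT] by blast
  define e where "e = from_nat_into (D \<inter> T)"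
  have re: "range e = D \<inter> T" unfolding e_def using neD D(1) by simp
  have eT: "\<And>i. e i \<in> T" using re by blast
  have "\<forall>n. \<exists>k. dist (X n k) x < 1 / (real n + 1) \<and>
      (\<forall>i\<in>{..n}. \<bar>f (X n k) (e i) - gs n (e i)\<bar> < 1 / (real n + 1))"
  proof
    fix n
    have pos: "1 / (real n + 1) > 0" by simp
    have ev1: "eventually (\<lambda>k. dist (X n k) x < 1 / (real n + 1)) sequentially"
      using tendstoD[OF X(2) pos] .
    have "\<forall>i\<in>{..n}. eventually (\<lambda>k. \<bar>f (X n k) (e i) - gs n (e i)\<bar> < 1 / (real n + 1)) sequentially"
      using tendstoD[OF Xc[OF eT] pos] by (simp add: dist_real_def)
    then have ev2: "eventually (\<lambda>k. \<forall>i\<in>{..n}. \<bar>f (X n k) (e i) - gs n (e i)\<bar> < 1 / (real n + 1)) sequentially"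
      by (rule eventually_ball_finite[rotated]) simp
    from eventually_conj[OF ev1 ev2] show "\<exists>k. dist (X n k) x < 1 / (real n + 1) \<and>
      (\<forall>i\<in>{..n}. \<bar>f (X n k) (e i) - gs n (e i)\<bar> < 1 / (real n + 1))"
      unfolding eventually_sequentially by blast
  qed
  then obtain k where k: "\<And>n. dist (X n (k n)) x < 1 / (real n + 1)"
    "\<And>n i. i \<le> n \<Longrightarrow> \<bar>f (X n (k n)) (e i) - gs n (e i)\<bar> < 1 / (real n + 1)"
    by (metis atMost_iff)
  define z where "z n = X n (k n)" for n
  have zT: "\<And>n. z n \<in> T" unfolding z_def using X(1) by simp
  have small: "\<exists>N. \<forall>n\<ge>N. 1 / (real n + 1) < r" if r: "r > 0" for r :: real
  proof -
    obtain N where N: "inverse (real (Suc N)) < r" using reals_Archimedean[OF r] by blast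
    have "1 / (real n + 1) < r" if "n \<ge> N" for n
    proof -
      have "1 / (real n + 1) \<le> 1 / (real N + 1)" using that by (simp add: frac_le)
      then show ?thesis using N by (simp add: inverse_eq_divide add.commute)
    qed
    then show ?thesis by blast
  qed
  have zx: "z \<longlonglongrightarrow> x"
    unfolding lim_sequentially
  proof (intro allI impI)
    fix r :: real assume "r > 0"
    then obtain N where N: "\<forall>n\<ge>N. 1 / (real n + 1) < r" using small by blast
    show "\<exists>N. \<forall>n\<ge>N. dist (z n) x < r"
      using N k(1) unfolding z_def by (meson less_trans)
  qed
  have ce: "(\<lambda>n. f (z n) (e i)) \<longlonglongrightarrow> g (e i)" for i
    unfolding lim_sequentially dist_real_def
  proof (intro allI impI)
    fix r :: real assume r: "r > 0"
    then obtain N1 where N1: "\<forall>n\<ge>N1. 1 / (real n + 1) < r / 2" using small[of "r/2"] by auto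
    obtain N2 where N2: "\<forall>n\<ge>N2. dist (gs n (e i)) (g (e i)) < r / 2"
      using assms(5)[OF eT] r unfolding lim_sequentially by (meson half_gt_zero)
    have "\<bar>f (z n) (e i) - g (e i)\<bar> < r" if n: "n \<ge> max (max N1 N2) i" for n
    proof -
      have "\<bar>f (z n) (e i) - gs n (e i)\<bar> < 1 / (real n + 1)" using k(2)[of i n] n unfolding z_def by simp
      moreover have "\<bar>gs n (e i) - g (e i)\<bar> < r / 2" using N2 n by (simp add: dist_real_def)
      moreover have "1 / (real n + 1) < r / 2" using N1 n by simp
      ultimately show ?thesis by linarith
    qed
    then show "\<exists>N. \<forall>n\<ge>N. \<bar>f (z n) (e i) - g (e i)\<bar> < r" by blast
  qed
  have cy: "(\<lambda>n. f (z n) y) \<longlonglongrightarrow> g y" if y: "y \<in> T" for y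
    unfolding lim_sequentially dist_real_def
  proof (intro allI impI)
    fix eps :: real assume eps: "eps > 0"
    obtain r where r: "r > 0" "ball y r \<subseteq> T" using oT y openE by blast
    define c where "c = exp (eps / 4)"
    have c1: "c > 1" unfolding c_def using eps by simp
    have lnc: "ln c = eps / 4" unfolding c_def by simp
    define del where "del = r * (c - 1) / c"
    have del: "del > 0" unfolding del_def using r c1 by simp
    obtain d where d: "d \<in> D" "d \<in> ball y del \<inter> T"
  proof -
      have "open (ball y del \<inter> T)" using oT by blast
      moreover have "y \<in> ball y del \<inter> T" using y del by simp
      ultimately show ?thesis using D(2)[of "ball y del \<inter> T"] that by blast
    qed
    have "d \<in> range e" using d re by blast
    then obtain i where i: "e i = d" by (metis imageE)
    have "dist d y < r * (c - 1) / c" using d(2) unfolding del_def by (simp add: dist_commute)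
    then have "dist d y * c < r * (c - 1)" using c1 by (simp add: pos_less_divide_eq)
    then have "c * dist d y < r * (c - 1)" by (simp add: mult.commute)
    then have L: "\<And>h. lipP T h \<Longrightarrow> \<bar>h d - h y\<bar> \<le> eps / 4"
      using lipP_D[OF _ r(2) r(1) c1] unfolding lnc by blast
    obtain N where N: "\<forall>n\<ge>N. \<bar>f (z n) (e i) - g (e i)\<bar> < eps / 4"
    proof -
      have "eps / 4 > 0" using eps by simp
      then show ?thesis using ce[of i] that unfolding lim_sequentially dist_real_def by blast
    qed
    have "\<bar>f (z n) y - g y\<bar> < eps" if "n \<ge> N" for n
    proof -
      have "\<bar>f (z n) d - f (z n) y\<bar> \<le> eps / 4" using L[OF Pf[OF zT]] .
      moreover have "\<bar>g d - g y\<bar> \<le> eps / 4" using L[OF Pg] .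
      moreover have "\<bar>f (z n) d - g d\<bar> < eps / 4" using N that i by blast
      ultimately show ?thesis by linarith
    qed
    then show "\<exists>N. \<forall>n\<ge>N. \<bar>f (z n) y - g y\<bar> < eps" by blast
  qed
  show ?thesis
    unfolding funk_A_def
  proof (intro conjI exI[of _ z])
    show "funk_horofunction T b g" by (rule assms(6))
    show "\<forall>n. z n \<in> T" using zT by blast
    show "z \<longlonglongrightarrow> x" by (rule zx)
    show "funk_converges T b z g" unfolding funk_converges_def using cy unfolding f_def by blast
  qed
qed

end
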